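(* Let $\kappa\in\mathbb{C}\setminus\{0\}$, and let $(\tau_m)_{m\in\mathbb{Z}}$, $(\theta_m)_{m\in\mathbb{Z}}$ be nonzero complex numbers. Put $$u_m=\frac{\tau_m}{\tau_{m+1}},\qquad w_m=\frac{\theta_{m+1}}{\theta_m}\qquad(m\in\mathbb{Z}).$$ Define the $\mathbb{Z}\times\mathbb{Z}$ matrices $\mathcal{L}$ and $\overline{\mathcal{L}}$ by $$\mathcal{L}_{m,k}=\delta_{m+1,k}+\sum_{j=0}^\infty b_{-j}(m)\,\delta_{m-j,k},\qquad \overline{\mathcal{L}}_{m,k}=c_{-1}(m)\,\delta_{m-1,k}+\sum_{j=0}^\infty c_j(m)\,\delta_{m+j,k},$$ where for $j\ge 0$ $$b_{-j}(m)=(-1)^{j+1}\prod_{i=1}^{j}u_{m-i}\prod_{i=0}^{j}w_{m-i}\,\bigl(\kappa u_{m-j}+u_{m-j-1}\bigr),$$ $$c_j(m)=\kappa^{-j-1}\prod_{i=0}^{j-1}u_{m+i}^{-1}\prod_{i=0}^{j}w_{m+i}^{-1}\,\bigl(\kappa u_{m+j}^{-1}+u_{m+j+1}^{-1}\bigr),\qquad c_{-1}(m)=\frac{u_{m-1}}{u_m}.$$ Then $$\mathcal{L}=\frac{\Theta}{T}\Bigl[\,W\,\frac{1}{1+\Lambda^{-1}}\,U\,(\Lambda-\kappa)\Bigr]\frac{T}{\Theta},\qquad \overline{\mathcal{L}}=\frac{\Theta}{T}\Bigl[\,\frac{1}{1-\kappa^{-1}\Lambda}\,U^{-1}\,(1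+\Lambda^{-1})\,W^{-1}\Bigr]\frac{T}{\Theta}.$$
   Context: $\Lambda$ is the $\mathbb{Z}\times\mathbb{Z}$ shift matrix, $\Lambda_{m,k}=\delta_{m+1,k}$, and $\Lambda^{-1}$ its inverse ($\Lambda^{-1}_{m,k}=\delta_{m-1,k}$); $1$ denotes the identity matrix. $U^{\pm1}=\mathrm{diag}[u_m^{\pm1}]$, $W^{\pm1}=\mathrm{diag}[w_m^{\pm1}]$ are diagonal matrices, $\frac{\Theta}{T}$ denotes the diagonal matrix $\mathrm{diag}[\theta_m/\tau_m]$ and $\frac{T}{\Theta}$ its inverse $\mathrm{diag}[\tau_m/\theta_m]$. The expressions $\frac{1}{1+\Lambda^{-1}}$ and $\frac{1}{1-\kappa^{-1}\Lambda}$ are understood as the series $\sum_{j\ge0}(-1)^j\Lambda^{-j}$ and $\sum_{j\ge0}\kappa^{-j}\Lambda^{j}$ respectively; all matrix products involved have finitely many nonzero terms in each entry. *)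

theory Defs
  imports "HOL-Analysis.Analysis"
begin

text \<open>Z x Z matrices are functions int => int => complex (row index first).\<close>

type_synonym zmat = "int \<Rightarrow> int \<Rightarrow> complex"

definition mmult :: "zmat \<Rightarrow> zmat \<Rightarrow> zmat" where
  "mmult A B = (\<lambda>m k. \<Sum>\<^sub>\<infinity>j\<in>(UNIV::int set). A m j * B j k)"

definition madd :: "zmat \<Rightarrow> zmat \<Rightarrow> zmat" where
  "madd A B = (\<lambda>m k. A m k + B m k)"

definition mscale :: "complex \<Rightarrow> zmat \<Rightarrow> zmat" where
  "mscale c A = (\<lambda>m k. c * A m k)"

definition idm :: zmat where
  "idm = (\<lambda>m k. if k = m then 1 else 0)"

definition shiftm :: zmat where
  "shiftm = (\<lambda>m k. if k = m + 1 then 1 else 0)"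

definition shiftinv :: zmat where
  "shiftinv = (\<lambda>m k. if k = m - 1 then 1 else 0)"

definition diagm :: "(int \<Rightarrow> complex) \<Rightarrow> zmat" where
  "diagm d = (\<lambda>m k. if k = m then d m else 0)"

text \<open>1/(1+Lambda^{-1}) = sum_{j>=0} (-1)^j Lambda^{-j}, entrywise.\<close>
definition inv_one_plus_shiftinv :: zmat where
  "inv_one_plus_shiftinv = (\<lambda>m k. \<Sum>\<^sub>\<infinity>j\<in>(UNIV::nat set).
      (-1)^j * (if k = m - int j then 1 else 0))"

text \<open>1/(1-kappa^{-1} Lambda) = sum_{j>=0} kappa^{-j} Lambda^{j}, entrywise.\<close>
definition inv_one_minus_kshift :: "complex \<Rightarrow> zmat" where
  "inv_one_minus_kshift \<kappa> = (\<lambda>m k. \<Sum>\<^sub>\<infinity>j\<in>(UNIV::nat set).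
      inverse \<kappa> ^ j * (if k = m + int j then 1 else 0))"

definition useq :: "(int \<Rightarrow> complex) \<Rightarrow> int \<Rightarrow> complex" where
  "useq \<tau> m = \<tau> m / \<tau> (m + 1)"

definition wseq :: "(int \<Rightarrow> complex) \<Rightarrow> int \<Rightarrow> complex" where
  "wseq \<theta> m = \<theta> (m + 1) / \<theta> m"

text \<open>b_{-j}(m), for j >= 0.\<close>
definition bcoef :: "complex \<Rightarrow> (int \<Rightarrow> complex) \<Rightarrow> (int \<Rightarrow> complex) \<Rightarrow> nat \<Rightarrow> int \<Rightarrow> complex" where
  "bcoef \<kappa> u w j m = (-1)^(j+1) * (\<Prod>i\<in>{1..j}. u (m - int i)) * (\<Prod>i\<in>{0..j}. w (m - int i))
      * (\<kappa> * u (m - int j) + u (m - int j - 1))"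

definition ccoef :: "complex \<Rightarrow> (int \<Rightarrow> complex) \<Rightarrow> (int \<Rightarrow> complex) \<Rightarrow> nat \<Rightarrow> int \<Rightarrow> complex" where
  "ccoef \<kappa> u w j m = inverse \<kappa> ^ (j+1) * (\<Prod>i\<in>{0..<j}. inverse (u (m + int i)))
      * (\<Prod>i\<in>{0..j}. inverse (w (m + int i)))
      * (\<kappa> * inverse (u (m + int j)) + inverse (u (m + int j + 1)))"

definition cminus1 :: "(int \<Rightarrow> complex) \<Rightarrow> int \<Rightarrow> complex" where
  "cminus1 u m = u (m - 1) / u m"

definition Lmat :: "complex \<Rightarrow> (int \<Rightarrow> complex) \<Rightarrow> (int \<Rightarrow> complex) \<Rightarrow> zmat" where
  "Lmat \<kappa> u w = (\<lambda>m k. (if k = m + 1 then 1 else 0) +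
      (\<Sum>\<^sub>\<infinity>j\<in>(UNIV::nat set). bcoef \<kappa> u w j m * (if k = m - int j then 1 else 0)))"

definition Lbarmat :: "complex \<Rightarrow> (int \<Rightarrow> complex) \<Rightarrow> (int \<Rightarrow> complex) \<Rightarrow> zmat" where
  "Lbarmat \<kappa> u w = (\<lambda>m k. cminus1 u m * (if k = m - 1 then 1 else 0) +
      (\<Sum>\<^sub>\<infinity>j\<in>(UNIV::nat set). ccoef \<kappa> u w j m * (if k = m + int j then 1 else 0)))"

end

theory Submission
  imports Defs
begin

lemma infsum_fin:
  fixes f :: "'a \<Rightarrow> complex"
  assumes "finite F" "\<And>j. j \<notin> F \<Longrightarrow> f j = 0"
  shows "infsum f UNIV = sum f F"
proof -
  have "infsum f UNIV = infsum f F"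
    by (rule infsum_cong_neutral) (use assms in auto)
  then show ?thesis using assms(1) by simp
qed

lemma mmult_diag_left: "mmult (diagm d) B m k = d m * B m k"
  unfolding mmult_def diagm_def
  by (subst infsum_fin[where F="{m}"]) auto

lemma mmult_diag_right: "mmult A (diagm d) m k = A m k * d k"
  unfolding mmult_def diagm_def
  by (subst infsum_fin[where F="{k}"]) auto

lemma N_eq: "inv_one_plus_shiftinv m j = (if j \<le> m then (-1)^nat(m-j) else 0)"
  unfolding inv_one_plus_shiftinv_def
  by (subst infsum_fin[where F="{nat (m-j)}"]) auto

lemma K_eq: "inv_one_minus_kshift \<kappa> m j = (if m \<le> j then inverse \<kappa> ^ nat(j-m) else 0)"
  unfolding inv_one_minus_kshift_def
  by (subst infsum_fin[where F="{nat (j-m)}"]) auto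

lemma L_eq: "Lmat \<kappa> u w m k = (if k = m + 1 then 1 else 0) +
   (if k \<le> m then bcoef \<kappa> u w (nat (m-k)) m else 0)"
  unfolding Lmat_def
  by (subst infsum_fin[where F="{nat (m-k)}"]) auto

lemma Lbar_eq: "Lbarmat \<kappa> u w m k = cminus1 u m * (if k = m - 1 then 1 else 0) +
   (if m \<le> k then ccoef \<kappa> u w (nat (k-m)) m else 0)"
  unfolding Lbarmat_def
  by (subst infsum_fin[where F="{nat (k-m)}"]) auto

lemma P1: assumes "\<And>m. \<tau> m \<noteq> 0"
  shows "(\<Prod>i\<in>{1..j}. useq \<tau> (m - int i)) = \<tau> (m - int j) / \<tau> m"
proof (induction j)
  case 0 then show ?case using assms by simp
next
  case (Suc j)
  have "(\<Prod>i\<in>{1..Suc j}. useq \<tau> (m - int i)) = (\<Prod>i\<in>{1..j}. useq \<tau> (m - int i)) * useq \<tau> (m - int (Suc j))"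
    by (simp add: prod.nat_ivl_Suc')
  also have "\<dots> = \<tau> (m - int (Suc j)) / \<tau> m"
    using Suc assms unfolding useq_def by (simp add: field_simps algebra_simps)
  finally show ?case .
qed

lemma P2: assumes "\<And>m. \<theta> m \<noteq> 0"
  shows "(\<Prod>i\<in>{0..j}. wseq \<theta> (m - int i)) = \<theta> (m+1) / \<theta> (m - int j)"
proof (induction j)
  case 0 then show ?case using assms by (simp add: wseq_def)
next
  case (Suc j)
  have "(\<Prod>i\<in>{0..Suc j}. wseq \<theta> (m - int i)) = (\<Prod>i\<in>{0..j}. wseq \<theta> (m - int i)) * wseq \<theta> (m - int (Suc j))"
    by (simp add: prod.atLeast0_atMost_Suc)
  also have "\<dots> = \<theta> (m+1) / \<theta> (m - int (Suc j))"
    using Suc assms unfolding wseq_def by (simp add: field_simps algebra_simps)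
  finally show ?case .
qed

lemma P3: assumes "\<And>m. \<tau> m \<noteq> 0"
  shows "(\<Prod>i\<in>{0..<j}. inverse (useq \<tau> (m + int i))) = \<tau> (m + int j) / \<tau> m"
proof (induction j)
  case 0 then show ?case using assms by simp
next
  case (Suc j)
  have "(\<Prod>i\<in>{0..<Suc j}. inverse (useq \<tau> (m + int i))) = (\<Prod>i\<in>{0..<j}. inverse (useq \<tau> (m + int i))) * inverse (useq \<tau> (m + int j))"
    by simp
  also have "\<dots> = \<tau> (m + int (Suc j)) / \<tau> m"
    using Suc assms unfolding useq_def by (simp add: field_simps algebra_simps)
  finally show ?case .
qed

lemma P4: assumes "\<And>m. \<theta> m \<noteq> 0"
  shows "(\<Prod>i\<in>{0..j}. inverse (wseq \<theta> (m + int i))) = \<theta> m / \<theta> (m + int j + 1)"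
proof (induction j)
  case 0 then show ?case using assms by (simp add: wseq_def)
next
  case (Suc j)
  have "(\<Prod>i\<in>{0..Suc j}. inverse (wseq \<theta> (m + int i))) = (\<Prod>i\<in>{0..j}. inverse (wseq \<theta> (m + int i))) * inverse (wseq \<theta> (m + int (Suc j)))"
    by (simp add: prod.atLeast0_atMost_Suc)
  also have "\<dots> = \<theta> m / \<theta> (m + int (Suc j) + 1)"
    using Suc assms unfolding wseq_def by (simp add: field_simps algebra_simps)
  finally show ?case .
qed

lemma R1: "mmult inv_one_plus_shiftinv (mmult (diagm u) (madd shiftm (mscale (- \<kappa>) idm))) m k
   = inv_one_plus_shiftinv m (k-1) * u (k-1) - \<kappa> * (inv_one_plus_shiftinv m k * u k)"
  unfolding mmult_def[of inv_one_plus_shiftinv] mmult_diag_left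
  apply (subst infsum_fin[where F="{k-1,k}"])
  by (auto simp: madd_def shiftm_def mscale_def idm_def)

lemma R2: "mmult (inv_one_minus_kshift \<kappa>) (mmult (diagm v)
                 (mmult (madd idm shiftinv) (diagm x))) m k
   = inv_one_minus_kshift \<kappa> m k * v k * x k + inv_one_minus_kshift \<kappa> m (k+1) * v (k+1) * x k"
  unfolding mmult_def[of "inv_one_minus_kshift \<kappa>"] mmult_diag_left mmult_diag_right
  apply (subst infsum_fin[where F="{k,k+1}"])
  by (auto simp: madd_def shiftinv_def idm_def)


theorem proposition2p1:
  fixes \<kappa> :: complex and \<tau> \<theta> :: "int \<Rightarrow> complex"
  assumes "\<kappa> \<noteq> 0"
    and "\<And>m. \<tau> m \<noteq> 0"
    and "\<And>m. \<theta> m \<noteq> 0"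
  defines "u \<equiv> useq \<tau>" and "w \<equiv> wseq \<theta>"
  shows "Lmat \<kappa> u w =
      mmult (diagm (\<lambda>m. \<theta> m / \<tau> m))
        (mmult (mmult (diagm w) (mmult inv_one_plus_shiftinv
                 (mmult (diagm u) (madd shiftm (mscale (- \<kappa>) idm)))))
          (diagm (\<lambda>m. \<tau> m / \<theta> m))) \<and>
    Lbarmat \<kappa> u w =
      mmult (diagm (\<lambda>m. \<theta> m / \<tau> m))
        (mmult (mmult (inv_one_minus_kshift \<kappa>) (mmult (diagm (\<lambda>m. inverse (u m)))
                 (mmult (madd idm shiftinv) (diagm (\<lambda>m. inverse (w m))))))
          (diagm (\<lambda>m. \<tau> m / \<theta> m)))"
proof
  note t = assms(2) and th = assms(3)
  show "Lmat \<kappa> u w =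
      mmult (diagm (\<lambda>m. \<theta> m / \<tau> m))
        (mmult (mmult (diagm w) (mmult inv_one_plus_shiftinv
                 (mmult (diagm u) (madd shiftm (mscale (- \<kappa>) idm)))))
          (diagm (\<lambda>m. \<tau> m / \<theta> m)))"
  proof (intro ext)
    fix m k :: int
    consider "k = m + 1" | j where "k = m - int j" | "k > m + 1"
    proof -
      assume a: "k = m + 1 \<Longrightarrow> thesis" "\<And>j. k = m - int j \<Longrightarrow> thesis" "k > m + 1 \<Longrightarrow> thesis"
      show thesis
      proof (cases "k \<le> m")
        case True then show thesis using a(2)[of "nat (m-k)"] by simp
      next
        case False then show thesis using a(1,3) by linarith
      qed
    qed 
    then show "Lmat \<kappa> u w m k = mmult (diagm (\<lambda>m. \<theta> m / \<tau> m))
        (mmult (mmult (diagm w) (mmult inv_one_plus_shiftinv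
                 (mmult (diagm u) (madd shiftm (mscale (- \<kappa>) idm)))))
          (diagm (\<lambda>m. \<tau> m / \<theta> m))) m k"
    proof cases
      case 1
      then show ?thesis unfolding mmult_diag_left mmult_diag_right R1 L_eq N_eq
        using t th by (simp add: 1 u_def w_def useq_def wseq_def)
    next
      case 2
      have n1: "nat (m - k) = j" "nat (m - (k-1)) = Suc j" using 2 by auto
      show ?thesis unfolding mmult_diag_left mmult_diag_right R1 L_eq N_eq n1 bcoef_def
        unfolding u_def w_def P1[OF t] P2[OF th] using 2 t th
        apply (simp add: 2 useq_def wseq_def)
        using t[of "m - int j"] t[of "m - int j + 1"] t[of m] th[of "m - int j"]
        apply (simp add: field_simps)
        done
    next
      case 3
      then show ?thesis unfolding mmult_diag_left mmult_diag_right R1 L_eq N_eq by simp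
    qed
  qed
next
  note t = assms(2) and th = assms(3)
  show "Lbarmat \<kappa> u w =
      mmult (diagm (\<lambda>m. \<theta> m / \<tau> m))
        (mmult (mmult (inv_one_minus_kshift \<kappa>) (mmult (diagm (\<lambda>m. inverse (u m)))
                 (mmult (madd idm shiftinv) (diagm (\<lambda>m. inverse (w m))))))
          (diagm (\<lambda>m. \<tau> m / \<theta> m)))"
  proof (intro ext)
    fix m k :: int
    consider "k = m - 1" | j where "k = m + int j" | "k < m - 1"
    proof -
      assume a: "k = m - 1 \<Longrightarrow> thesis" "\<And>j. k = m + int j \<Longrightarrow> thesis" "k < m - 1 \<Longrightarrow> thesis"
      show thesis
      proof (cases "m \<le> k")
        case True then show thesis using a(2)[of "nat (k-m)"] by simp
      next
        case False then show thesis using a(1,3) by linarith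
      qed
    qed 
    then show "Lbarmat \<kappa> u w m k = mmult (diagm (\<lambda>m. \<theta> m / \<tau> m))
        (mmult (mmult (inv_one_minus_kshift \<kappa>) (mmult (diagm (\<lambda>m. inverse (u m)))
                 (mmult (madd idm shiftinv) (diagm (\<lambda>m. inverse (w m))))))
          (diagm (\<lambda>m. \<tau> m / \<theta> m))) m k"
    proof cases
      case 1
      then show ?thesis unfolding mmult_diag_left mmult_diag_right R2 Lbar_eq K_eq cminus1_def
        using t th apply (simp add: 1 u_def w_def useq_def wseq_def)
        done
    next
      case 2
      have n1: "nat (k - m) = j" "nat (k + 1 - m) = Suc j" using 2 by auto
      show ?thesis unfolding mmult_diag_left mmult_diag_right R2 Lbar_eq K_eq n1 ccoef_def
        unfolding u_def w_def P3[OF t] P4[OF th] using 2 t th assms(1)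
        apply (simp add: 2 useq_def wseq_def)
        using t[of "m + int j"] t[of "m + int j + 1"] t[of m] th[of "m + int j"] th[of "m + int j + 1"] assms(1)
        apply (simp add: field_simps)
        done
    next
      case 3
      then show ?thesis unfolding mmult_diag_left mmult_diag_right R2 Lbar_eq K_eq by simp
    qed
  qed
qed

end
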